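(* Let $n\ge 1$ and let $A_1,\dots,A_n$ be real orthogonal $n\times n$ matrices such that $A_1=\mathbb{1}_n$ (the identity) and $A_iA_j+A_jA_i=-2\delta_{i,j}\mathbb{1}_n$ for all $i,j\in\{2,\dots,n\}$. For $x,y\in\mathcal{S}^{n-1}$ define $\alpha_i(x,y)=(A_ix\,|\,y)$ and $$M(x,y)=\sum_{i=1}^n\alpha_i(x,y)A_i.$$ Then $M$ is a continuous map from $\mathcal{S}^{n-1}\times\mathcal{S}^{n-1}$ to the orthogonal group $O(n)$, and $M(x,y)\,x=y$ for all $x,y\in\mathcal{S}^{n-1}$.
   Context: $\mathcal{S}^{n-1}$ is the unit sphere of $\mathbb{R}^n$, $(\cdot|\cdot)$ is the standard Euclidean inner product on $\mathbb{R}^n$, and $\delta_{i,j}$ is the Kronecker delta. (Such families exist for $n=2,4,8$.) *)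

theory Defs
  imports "HOL-Analysis.Analysis"
begin

definition alpha :: "(nat \<Rightarrow> real^'n^'n) \<Rightarrow> nat \<Rightarrow> real^'n \<Rightarrow> real^'n \<Rightarrow> real" where
  "alpha A i x y = (A i *v x) \<bullet> y"

definition Mmap :: "(nat \<Rightarrow> real^'n^'n) \<Rightarrow> real^'n \<Rightarrow> real^'n \<Rightarrow> real^'n^'n" where
  "Mmap A x y = (\<Sum>i = 1..CARD('n). alpha A i x y *\<^sub>R A i)"

end

theory Submission
  imports Defs
begin

lemma sum_mat_vec:
  fixes c :: "nat \<Rightarrow> real" and A :: "nat \<Rightarrow> real^'n^'n"
  shows "(\<Sum>i\<in>S. c i *\<^sub>R A i) *v v = (\<Sum>i\<in>S. c i *\<^sub>R (A i *v v))"
proof (induction S rule: infinite_finite_induct)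
  case (infinite S) then show ?case by simp
next
  case empty then show ?case by simp
next
  case (insert x F) then show ?case
    by (simp add: matrix_vector_mult_add_rdistrib scaleR_matrix_vector_assoc)
qed

lemma mm_rneg: "(P::real^'n^'n) ** (- Q) = - (P ** Q)"
  by (simp add: matrix_matrix_mult_def vec_eq_iff sum_negf)

lemma mm_lneg: "(- P::real^'n^'n) ** Q = - (P ** Q)"
  by (simp add: matrix_matrix_mult_def vec_eq_iff sum_negf)

lemma inner_mat:
  fixes P Q :: "real^'n^'n"
  shows "(P *v v) \<bullet> (Q *v v) = v \<bullet> ((transpose P ** Q) *v v)"
  by (metis dot_lmul_matrix matrix_vector_mul_assoc vector_transpose_matrix)

theorem lemma2:
  fixes A :: "nat \<Rightarrow> real^'n^'n"
  assumes orth: "\<And>i. i \<in> {1..CARD('n)} \<Longrightarrow> orthogonal_matrix (A i)"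
    and A1: "A 1 = mat 1"
    and anti: "\<And>i j. i \<in> {2..CARD('n)} \<Longrightarrow> j \<in> {2..CARD('n)} \<Longrightarrow>
               A i ** A j + A j ** A i = (if i = j then -2 else 0) *\<^sub>R mat 1"
  shows "continuous_on (sphere 0 1 \<times> sphere 0 1) (\<lambda>(x, y). Mmap A x y)
       \<and> (\<forall>x \<in> sphere 0 1. \<forall>y \<in> sphere 0 1.
            orthogonal_matrix (Mmap A x y) \<and> Mmap A x y *v x = y)"
proof -
  define n where "n = CARD('n)"
  have n1: "1 \<le> n" unfolding n_def by (simp add: Suc_leI)
  have skew: "transpose (A i) = - A i" if "i \<in> {2..n}" for i
  proof -
    have sq: "A i ** A i = - mat 1"
    proof -
      have "A i ** A i + A i ** A i = (-2) *\<^sub>R mat 1"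
        using anti[of i i] that unfolding n_def by simp
      then have "(2::real) *\<^sub>R (A i ** A i) = (2::real) *\<^sub>R (- mat 1)"
        by (simp add: scaleR_2)
      then show ?thesis by (metis scaleR_cancel_left zero_neq_numeral)
    qed
    have tt: "transpose (A i) ** A i = mat 1"
      using orth[of i] that unfolding n_def orthogonal_matrix by auto
    have "transpose (A i) = transpose (A i) ** mat 1" by simp
    also have "\<dots> = - (transpose (A i) ** (A i ** A i))" by (simp add: sq mm_rneg)
    also have "\<dots> = - A i" by (simp add: matrix_mul_assoc tt)
    finally show ?thesis .
  qed
  have K: "transpose (A i) ** A j + transpose (A j) ** A i = (if i = j then 2 else 0) *\<^sub>R mat 1"
    if "i \<in> {1..n}" "j \<in> {1..n}" for i j
  proof (cases "i = 1")
    case True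
    show ?thesis
    proof (cases "j = 1")
      case True
      have "transpose (A 1) ** A 1 + transpose (A 1) ** A 1 = (2::real) *\<^sub>R mat 1"
        unfolding A1 by (simp add: scaleR_2)
      with True \<open>i = 1\<close> show ?thesis by simp
    next
      case False
      then have "j \<in> {2..n}" using that by auto
      then show ?thesis using True False by (simp only: A1 skew) simp
    qed
  next
    case False
    then have i2: "i \<in> {2..n}" using that by auto
    show ?thesis
    proof (cases "j = 1")
      case True with False i2 show ?thesis by (simp only: A1 skew) simp
    next
      case False
      then have "j \<in> {2..n}" using that by auto
      then have j2: "j \<in> {2..n}" .
      have "transpose (A i) ** A j + transpose (A j) ** A i = -(A i ** A j + A j ** A i)"
        by (simp add: skew[OF i2] skew[OF j2] mm_lneg)
      also have "\<dots> = - ((if i = j then -2 else 0) *\<^sub>R mat 1)"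
        using anti[of i j] i2 j2 unfolding n_def by simp
      finally show ?thesis by simp
    qed
  qed
  have O: "(A i *v v) \<bullet> (A j *v v) = (if i = j then v \<bullet> v else 0)"
    if "i \<in> {1..n}" "j \<in> {1..n}" for i j v
  proof -
    have "2 * ((A i *v v) \<bullet> (A j *v v)) = (A i *v v) \<bullet> (A j *v v) + (A j *v v) \<bullet> (A i *v v)"
      by (simp add: inner_commute)
    also have "\<dots> = v \<bullet> ((transpose (A i) ** A j + transpose (A j) ** A i) *v v)"
      by (simp add: inner_mat matrix_vector_mult_add_rdistrib inner_add_right)
    also have "\<dots> = 2 * (if i = j then v \<bullet> v else 0)"
      by (simp add: K[OF that] scaleR_matrix_vector_assoc[symmetric])
    finally show ?thesis by simp
  qed
  have Mv: "Mmap A x y *v v = (\<Sum>i=1..n. alpha A i x y *\<^sub>R (A i *v v))" for x y v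
    unfolding Mmap_def n_def by (rule sum_mat_vec)
  have normsq: "(\<Sum>i=1..n. c i *\<^sub>R (A i *v v)) \<bullet> (\<Sum>i=1..n. c i *\<^sub>R (A i *v v))
      = (\<Sum>i=1..n. c i ^ 2) * (v \<bullet> v)" for c v
  proof -
    have "(\<Sum>i=1..n. c i *\<^sub>R (A i *v v)) \<bullet> (\<Sum>i=1..n. c i *\<^sub>R (A i *v v))
       = (\<Sum>i=1..n. \<Sum>j=1..n. c i * c j * ((A i *v v) \<bullet> (A j *v v)))"
      by (simp add: inner_sum_left inner_sum_right sum_distrib_left mult.assoc)
         (metis (no_types, lifting) inner_commute sum.cong)
    also have "\<dots> = (\<Sum>i=1..n. \<Sum>j=1..n. if i = j then c i * c j * (v \<bullet> v) else 0)"
      by (intro sum.cong refl) (simp add: O)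
    also have "\<dots> = (\<Sum>i=1..n. c i ^ 2 * (v \<bullet> v))"
      by (simp add: power2_eq_square)
    finally show ?thesis by (simp add: sum_distrib_right)
  qed
  have main: "orthogonal_matrix (Mmap A x y) \<and> Mmap A x y *v x = y"
    if x: "x \<in> sphere 0 1" and y: "y \<in> sphere 0 1" for x y
  proof -
    have xx: "x \<bullet> x = 1" using x by (simp add: dot_square_norm)
    have yy: "y \<bullet> y = 1" using y by (simp add: dot_square_norm)
    define B where "B = (\<lambda>i. A i *v x) ` {1..n}"
    have inj: "inj_on (\<lambda>i. A i *v x) {1..n}"
    proof (rule inj_onI)
      fix i j assume ij: "i \<in> {1..n}" "j \<in> {1..n}" "A i *v x = A j *v x"
      have "(A i *v x) \<bullet> (A j *v x) = 1" using O[OF ij(1) ij(1), of x] ij(3) xx by simp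
      then show "i = j" using O[OF ij(1) ij(2), of x] by (auto split: if_splits)
    qed
    have cardB: "card B = n" unfolding B_def using card_image[OF inj] by simp
    have indep: "independent B"
    proof (rule pairwise_orthogonal_independent)
      show "pairwise orthogonal B" unfolding B_def pairwise_def orthogonal_def
        using O by auto
      show "0 \<notin> B"
      proof
        assume "0 \<in> B"
        then obtain i where i: "i \<in> {1..n}" "A i *v x = 0" unfolding B_def by auto
        then show False using O[OF i(1) i(1), of x] xx by simp
      qed
    qed
    have spanB: "UNIV \<subseteq> span B"
      by (rule card_ge_dim_independent[OF _ indep]) (auto simp: cardB n_def)
    define z where "z = y - Mmap A x y *v x"
    have zorth: "orthogonal z b" if "b \<in> B" for b
    proof -
      obtain j where j: "j \<in> {1..n}" and b: "b = A j *v x" using \<open>b \<in> B\<close> B_def by auto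
      have "(Mmap A x y *v x) \<bullet> b = (\<Sum>i=1..n. alpha A i x y * ((A i *v x) \<bullet> (A j *v x)))"
        by (simp add: Mv b inner_sum_left)
      also have "\<dots> = (\<Sum>i=1..n. if i = j then alpha A j x y else 0)"
      proof (rule sum.cong[OF refl])
        fix i assume "i \<in> {1..n}"
        then show "alpha A i x y * ((A i *v x) \<bullet> (A j *v x)) = (if i = j then alpha A j x y else 0)"
          using O[OF \<open>i \<in> {1..n}\<close> j, of x] xx by simp
      qed
      also have "\<dots> = alpha A j x y" using j by simp
      also have "\<dots> = y \<bullet> b" by (simp add: alpha_def b inner_commute)
      finally show ?thesis unfolding z_def orthogonal_def by (simp add: inner_diff_left)
    qed
    have "orthogonal z z" using spanB zorth orthogonal_to_span by blast
    then have eq: "Mmap A x y *v x = y" unfolding z_def orthogonal_def by simp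
    have s1: "(\<Sum>i=1..n. (alpha A i x y) ^ 2) = 1"
      using normsq[of "\<lambda>i. alpha A i x y" x] eq yy xx Mv[of x y x] by simp
    have "orthogonal_transformation (\<lambda>v. Mmap A x y *v v)"
      unfolding orthogonal_transformation
    proof (intro conjI allI)
      show "linear ((*v) (Mmap A x y))" by simp
      fix v
      have "(Mmap A x y *v v) \<bullet> (Mmap A x y *v v) = v \<bullet> v"
        using normsq[of "\<lambda>i. alpha A i x y" v] s1 by (simp add: Mv)
      then show "norm (Mmap A x y *v v) = norm v" by (simp add: norm_eq_sqrt_inner)
    qed
    then have "orthogonal_matrix (Mmap A x y)"
      using orthogonal_transformation_matrix[of "\<lambda>v. Mmap A x y *v v"] by simp
    with eq show ?thesis by simp
  qed
  have cont: "continuous_on (sphere 0 1 \<times> sphere 0 1) (\<lambda>(x, y). Mmap A x y)"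
  proof -
    have "continuous_on UNIV (\<lambda>p::(real^'n) \<times> (real^'n). Mmap A (fst p) (snd p))"
      unfolding Mmap_def alpha_def
      by (intro continuous_intros linear_continuous_on
          bounded_linear_compose[OF matrix_vector_mul_bounded_linear bounded_linear_fst])
    then show ?thesis
      by (rule continuous_on_subset[THEN continuous_on_eq]) (auto simp: case_prod_beta)
  qed
  show ?thesis using cont main by blast
qed

end
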